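(* Let $m\ge 1$, $r\ge 1$, and for a multi-index $\alpha=(\alpha_1,\dots,\alpha_r)\in\mathbb Z_{\ge 0}^r$ put $|\alpha|=\sum_{l=1}^r\alpha_l$ and $w(\alpha)=\sum_{l=1}^r l\,\alpha_l$. For $0\le k\le j$ define the polynomials $$\mathcal M^{(r)}_{k,j}(t_1,\dots,t_r)=\sum_{|\alpha|=k,\ w(\alpha)=j}\frac{k!}{\alpha_1!\cdots\alpha_r!}\prod_{l=1}^r t_l^{\alpha_l},$$ i.e. $\mathcal M^{(r)}_{k,j}$ is the coefficient of $\varepsilon^j$ in $\big(\sum_{l=1}^r t_l\varepsilon^l\big)^k$, and set $\mathcal M^{(r)}_{k,j}=0$ for $k>j$. Consider an $\varepsilon$-dependent family of $\mathfrak{gl}_m(\mathbb C)$-valued connection matrices of the form $$A(\lambda)=\sum_{k=0}^{r-1}\frac{B_k}{(\lambda-u)^{k+1}}+\frac{C}{\lambda-v}+(\text{terms holomorphic at }\lambda=u\text{ and }\lambda=v),\qquad B_k=\sum_{j=k}^{r-1}A_j\,\mathcal M^{(r-1)}_{k,j}(t_1,\dots,t_{r-1}),$$ where $$v=u+\sum_{i=1}^r t_i\varepsilon^i,$$ and assume that, as $\varepsilon\to0$, there are $\varepsilon$-independent matrices $W^{[j]}$ ($j\ge -r$) and $A^{[k,l]}$ ($0\le k\le r-1$, $l\ge 0$) with asymptotic expansions $$C\sim\sum_{j=-r}^{\infty}W^{[j]}\varepsilon^j,\qquad A_k\sim-\sum_{l=1}^{r-k}\frac{W^{[-k-l]}}{\varepsilon^l}+A^{[k,0]}+\sum_{l=1}^\infty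 A^{[k,l]}\varepsilon^l\quad(0\le k\le r-1),$$ the holomorphic terms having a finite limit. Then the limit $\varepsilon\to0$ of the connection exists and equals $$\tilde A(\lambda)=\sum_{i=0}^{r}\frac{\tilde B_i(t_1,\dots,t_r)}{(\lambda-u)^{i+1}}+(\text{holomorphic terms}),\qquad \tilde B_i=\sum_{k=i}^{r}\tilde A_k\,\mathcal M^{(r)}_{i,k}(t_1,\dots,t_r),$$ where $\tilde A_k=W^{[-k]}+A^{[k,0]}$ for $k<r$ and $\tilde A_r=W^{[-r]}$.
   Context: The matrices $A_j,C,W^{[j]},A^{[k,l]}$ are $m\times m$ complex matrices (possibly depending on further variables), $u$ and $t_1,\dots,t_r$ are complex parameters and $\varepsilon$ is a small complex parameter; $\lambda$ is the spectral variable on $\mathbb{CP}^1$. *)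

theory Defs
  imports "HOL-Complex_Analysis.Complex_Analysis"
begin

text \<open>m x m complex matrices are modelled as complex^'m^'m (m = CARD('m) \<ge> 1).\<close>

type_synonym 'm cmat = "complex ^ 'm ^ 'm"

no_notation fps_nth (infixl "$" 75)

definition csc :: "complex \<Rightarrow> ('m::finite) cmat \<Rightarrow> 'm cmat" where
  "csc c A = (\<chi> i j. c * A $ i $ j)"

definition multi_idx :: "nat \<Rightarrow> nat \<Rightarrow> nat \<Rightarrow> (nat \<Rightarrow> nat) set" where
  "multi_idx r k j = {\<alpha>. (\<forall>l. l \<notin> {1..r} \<longrightarrow> \<alpha> l = 0)
                      \<and> (\<Sum>l=1..r. \<alpha> l) = k \<and> (\<Sum>l=1..r. l * \<alpha> l) = j}"

text \<open>The polynomial M^(r)_{k,j}(t_1,...,t_r); it is automatically 0 for k > j.\<close>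

definition Mpoly :: "nat \<Rightarrow> nat \<Rightarrow> nat \<Rightarrow> (nat \<Rightarrow> complex) \<Rightarrow> complex" where
  "Mpoly r k j t = (\<Sum>\<alpha>\<in>multi_idx r k j.
      (of_nat (fact k) / of_nat (\<Prod>l=1..r. fact (\<alpha> l))) * (\<Prod>l=1..r. t l ^ \<alpha> l))"

definition has_asymp_exp :: "(complex \<Rightarrow> ('m::finite) cmat) \<Rightarrow> int \<Rightarrow> (int \<Rightarrow> 'm cmat) \<Rightarrow> bool" where
  "has_asymp_exp f lo c \<longleftrightarrow>
     (\<forall>N\<ge>lo. \<exists>K. \<forall>\<^sub>F \<epsilon> in at 0.
        norm (f \<epsilon> - (\<Sum>j\<in>{lo..N}. csc (\<epsilon> powi j) (c j))) \<le> K * cmod \<epsilon> powr of_int (N + 1))"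

definition mat_holo_on :: "(complex \<Rightarrow> ('m::finite) cmat) \<Rightarrow> complex set \<Rightarrow> bool" where
  "mat_holo_on f U \<longleftrightarrow> (\<forall>i j. (\<lambda>z. f z $ i $ j) holomorphic_on U)"

end

theory Submission
  imports Defs
begin

definition MI :: "nat set \<Rightarrow> nat \<Rightarrow> (nat \<Rightarrow> nat) set" where
  "MI L k = {\<alpha>. (\<forall>l. l \<notin> L \<longrightarrow> \<alpha> l = 0) \<and> (\<Sum>l\<in>L. \<alpha> l) = k}"

lemma MI_empty: "MI {} k = (if k = 0 then {\<lambda>_. 0} else {})"
  by (auto simp: MI_def)

lemma MI_insert:
  assumes "finite L" "a \<notin> L"
  shows "MI (insert a L) k = (\<lambda>(i,\<beta>). \<beta>(a:=i)) ` (SIGMA i:{..k}. MI L (k - i))"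
proof (intro set_eqI iffI)
  fix \<alpha> assume h: "\<alpha> \<in> MI (insert a L) k"
  have s: "(\<Sum>l\<in>L. \<alpha> l) = k - \<alpha> a" "\<alpha> a \<le> k" using h assms by (auto simp: MI_def)
  have "(\<Sum>l\<in>L. (\<alpha>(a:=0)) l) = (\<Sum>l\<in>L. \<alpha> l)" using assms by (intro sum.cong) auto
  then have "(\<alpha> a, \<alpha>(a:=0)) \<in> (SIGMA i:{..k}. MI L (k - i))" using h s by (auto simp: MI_def)
  moreover have "\<alpha> = (\<lambda>(i,\<beta>). \<beta>(a:=i)) (\<alpha> a, \<alpha>(a:=0))" by auto
  ultimately show "\<alpha> \<in> (\<lambda>(i,\<beta>). \<beta>(a:=i)) ` (SIGMA i:{..k}. MI L (k - i))" by blast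
next
  fix \<alpha> assume "\<alpha> \<in> (\<lambda>(i,\<beta>). \<beta>(a:=i)) ` (SIGMA i:{..k}. MI L (k - i))"
  then obtain i \<beta> where h: "i \<le> k" "\<beta> \<in> MI L (k - i)" "\<alpha> = \<beta>(a:=i)" by auto
  have "(\<Sum>l\<in>L. \<alpha> l) = (\<Sum>l\<in>L. \<beta> l)" using assms h by (intro sum.cong) auto
  moreover have "\<forall>l. l \<notin> insert a L \<longrightarrow> \<alpha> l = 0" using h unfolding MI_def by auto
  moreover have "(\<Sum>l\<in>L. \<beta> l) = k - i" using h(2) unfolding MI_def by blast
  ultimately show "\<alpha> \<in> MI (insert a L) k" using h(1,3) assms unfolding MI_def by (simp add: sum.insert)
qed

lemma finite_MI: "finite L \<Longrightarrow> finite (MI L k)"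
proof (induction L arbitrary: k rule: finite_induct)
  case empty then show ?case by (simp add: MI_empty)
next
  case (insert a L) then show ?case by (simp add: MI_insert)
qed

lemma multinomial:
  fixes x :: "nat \<Rightarrow> 'a::field_char_0"
  assumes "finite L"
  shows "(\<Sum>l\<in>L. x l) ^ k = (\<Sum>\<alpha>\<in>MI L k. (fact k / (\<Prod>l\<in>L. fact (\<alpha> l))) * (\<Prod>l\<in>L. x l ^ \<alpha> l))"
  using assms
proof (induction L arbitrary: k rule: finite_induct)
  case empty then show ?case by (simp add: MI_empty)
next
  case (insert a L)
  define g where "g = (\<lambda>\<alpha>. (fact k / (\<Prod>l\<in>insert a L. fact (\<alpha> l))) * (\<Prod>l\<in>insert a L. x l ^ \<alpha> l) :: 'a)"
  have inj: "inj_on (\<lambda>(i,\<beta>). \<beta>(a:=i)) (SIGMA i:{..k}. MI L (k - i))"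
  proof (rule inj_onI, clarify)
    fix i \<beta> j \<gamma> assume "i \<le> k" "\<beta> \<in> MI L (k - i)" "j \<le> k" "\<gamma> \<in> MI L (k - j)" 
    assume e: "\<beta>(a := i) = \<gamma>(a := j)"
    have ij: "i = j" using fun_cong[OF e, of a] by simp
    have "\<beta> a = 0" "\<gamma> a = 0" using \<open>\<beta> \<in> MI L (k - i)\<close> \<open>\<gamma> \<in> MI L (k - j)\<close> insert(2) unfolding MI_def by auto
    moreover have "\<beta> l = \<gamma> l" if "l \<noteq> a" for l using fun_cong[OF e, of l] that by simp
    ultimately have "\<beta> = \<gamma>" by (metis ext)
    with ij show "i = j \<and> \<beta> = \<gamma>" by simp
  qed
  have "(\<Sum>l\<in>insert a L. x l) ^ k = (x a + (\<Sum>l\<in>L. x l)) ^ k" using insert by simp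
  also have "\<dots> = (\<Sum>i\<le>k. of_nat (k choose i) * x a ^ i * (\<Sum>l\<in>L. x l) ^ (k - i))"
    by (rule binomial_ring)
  also have "\<dots> = (\<Sum>i\<le>k. \<Sum>\<beta>\<in>MI L (k - i). g (\<beta>(a:=i)))"
  proof (rule sum.cong[OF refl])
    fix i assume i: "i \<in> {..k}"
    have "of_nat (k choose i) * x a ^ i * (\<Sum>l\<in>L. x l) ^ (k - i)
       = (\<Sum>\<beta>\<in>MI L (k - i). of_nat (k choose i) * x a ^ i * ((fact (k - i) / (\<Prod>l\<in>L. fact (\<beta> l))) * (\<Prod>l\<in>L. x l ^ \<beta> l)))"
      by (simp add: insert.IH sum_distrib_left)
    also have "\<dots> = (\<Sum>\<beta>\<in>MI L (k - i). g (\<beta>(a:=i)))"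
    proof (rule sum.cong[OF refl])
      fix \<beta> assume "\<beta> \<in> MI L (k - i)"
      have p1: "(\<Prod>l\<in>L. fact ((\<beta>(a:=i)) l)) = (\<Prod>l\<in>L. fact (\<beta> l) :: 'a)"
        using insert(2) by (intro prod.cong) auto
      have p2: "(\<Prod>l\<in>L. x l ^ ((\<beta>(a:=i)) l)) = (\<Prod>l\<in>L. x l ^ \<beta> l)"
        using insert(2) by (intro prod.cong) auto
      have nz: "(\<Prod>l\<in>L. fact (\<beta> l) :: 'a) \<noteq> 0" by (simp add: prod_zero_iff insert(1))
      have b: "(of_nat (k choose i) :: 'a) = fact k / (fact i * fact (k - i))" using i by (simp add: binomial_fact)
      show "of_nat (k choose i) * x a ^ i * ((fact (k - i) / (\<Prod>l\<in>L. fact (\<beta> l))) * (\<Prod>l\<in>L. x l ^ \<beta> l)) = g (\<beta>(a:=i))"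
        unfolding g_def using insert(1,2) p1 p2 nz b by (simp add: field_simps)
    qed
    finally show "of_nat (k choose i) * x a ^ i * (\<Sum>l\<in>L. x l) ^ (k - i) = (\<Sum>\<beta>\<in>MI L (k - i). g (\<beta>(a:=i)))" .
  qed
  also have "\<dots> = (\<Sum>(i,\<beta>)\<in>(SIGMA i:{..k}. MI L (k - i)). g (\<beta>(a:=i)))"
    by (intro sum.Sigma finite_atMost ballI finite_MI insert(1))
  also have "\<dots> = (\<Sum>\<alpha>\<in>MI (insert a L) k. g \<alpha>)"
    unfolding MI_insert[OF insert(1,2)] using inj by (simp add: sum.reindex case_prod_unfold)
  finally show ?case unfolding g_def .
qed

lemma multi_idx_MI: "multi_idx r k j = {\<alpha>\<in>MI {1..r} k. (\<Sum>l=1..r. l * \<alpha> l) = j}"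
  by (auto simp: multi_idx_def MI_def)

lemma weight_le: "\<alpha> \<in> MI {1..r} n \<Longrightarrow> (\<Sum>l=1..r. l * \<alpha> l) \<le> r * n"
proof -
  assume "\<alpha> \<in> MI {1..r} n"
  then have "n = (\<Sum>l=1..r. \<alpha> l)" by (simp add: MI_def)
  then have "r * n = (\<Sum>l=1..r. r * \<alpha> l)" by (simp add: sum_distrib_left)
  moreover have "(\<Sum>l=1..r. l * \<alpha> l) \<le> (\<Sum>l=1..r. r * \<alpha> l)" by (intro sum_mono) auto
  ultimately show ?thesis by simp
qed

lemma Mpoly_expand:
  fixes t :: "nat \<Rightarrow> complex"
  assumes D: "D \<ge> r * n"
  shows "(\<Sum>i=1..r. t i * \<epsilon> ^ i) ^ n = (\<Sum>j=0..D. Mpoly r n j t * \<epsilon> ^ j)"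
proof -
  define w where "w = (\<lambda>\<alpha>::nat\<Rightarrow>nat. \<Sum>l=1..r. l * \<alpha> l)"
  define c where "c = (\<lambda>\<alpha>::nat\<Rightarrow>nat. (of_nat (fact n) / of_nat (\<Prod>l=1..r. fact (\<alpha> l))) * (\<Prod>l=1..r. t l ^ \<alpha> l) :: complex)"
  have wD: "\<And>\<alpha>. \<alpha> \<in> MI {1..r} n \<Longrightarrow> w \<alpha> \<le> D" unfolding w_def using weight_le D order_trans by blast
  have "(\<Sum>i=1..r. t i * \<epsilon> ^ i) ^ n = (\<Sum>\<alpha>\<in>MI {1..r} n. (fact n / (\<Prod>l\<in>{1..r}. fact (\<alpha> l))) * (\<Prod>l\<in>{1..r}. (t l * \<epsilon> ^ l) ^ \<alpha> l))"
    by (rule multinomial) simp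
  also have "\<dots> = (\<Sum>\<alpha>\<in>MI {1..r} n. c \<alpha> * \<epsilon> ^ w \<alpha>)"
  proof (rule sum.cong[OF refl])
    fix \<alpha>
    have "(\<Prod>l\<in>{1..r}. (t l * \<epsilon> ^ l) ^ \<alpha> l) = (\<Prod>l\<in>{1..r}. t l ^ \<alpha> l) * (\<Prod>l\<in>{1..r}. \<epsilon> ^ (l * \<alpha> l))"
      by (simp add: power_mult_distrib power_mult prod.distrib)
    also have "\<dots> = (\<Prod>l\<in>{1..r}. t l ^ \<alpha> l) * \<epsilon> ^ w \<alpha>" by (simp add: w_def power_sum)
    finally show "(fact n / (\<Prod>l\<in>{1..r}. fact (\<alpha> l))) * (\<Prod>l\<in>{1..r}. (t l * \<epsilon> ^ l) ^ \<alpha> l) = c \<alpha> * \<epsilon> ^ w \<alpha>"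
      by (simp add: c_def of_nat_prod)
  qed
  also have "\<dots> = (\<Sum>j=0..D. \<Sum>\<alpha>\<in>{\<alpha>\<in>MI {1..r} n. w \<alpha> = j}. c \<alpha> * \<epsilon> ^ w \<alpha>)"
    using wD by (intro sum.group[symmetric]) (auto simp: finite_MI)
  also have "\<dots> = (\<Sum>j=0..D. Mpoly r n j t * \<epsilon> ^ j)"
  proof (rule sum.cong[OF refl])
    fix j
    have "(\<Sum>\<alpha>\<in>{\<alpha>\<in>MI {1..r} n. w \<alpha> = j}. c \<alpha> * \<epsilon> ^ w \<alpha>) = (\<Sum>\<alpha>\<in>{\<alpha>\<in>MI {1..r} n. w \<alpha> = j}. c \<alpha> * \<epsilon> ^ j)"
      by (rule sum.cong) auto
    then show "(\<Sum>\<alpha>\<in>{\<alpha>\<in>MI {1..r} n. w \<alpha> = j}. c \<alpha> * \<epsilon> ^ w \<alpha>) = Mpoly r n j t * \<epsilon> ^ j"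
      by (simp add: Mpoly_def multi_idx_MI c_def w_def sum_distrib_right)
  qed
  finally show ?thesis .
qed

lemma Mpoly_below: "j < k \<Longrightarrow> Mpoly r k j t = 0"
proof -
  assume jk: "j < k"
  have "multi_idx r k j = {}"
  proof (rule ccontr)
    assume "multi_idx r k j \<noteq> {}"
    then obtain \<alpha> where a: "\<alpha> \<in> multi_idx r k j" by blast
    then have "k = (\<Sum>l=1..r. \<alpha> l)" "j = (\<Sum>l=1..r. l * \<alpha> l)" by (auto simp: multi_idx_def)
    moreover have "(\<Sum>l=1..r. \<alpha> l) \<le> (\<Sum>l=1..r. l * \<alpha> l)" by (intro sum_mono) auto
    ultimately show False using jk by simp
  qed
  then show ?thesis by (simp add: Mpoly_def)
qed

lemma Mpoly_pred:
  assumes r: "r \<ge> 1" and j: "j < r"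
  shows "Mpoly (r - 1) k j t = Mpoly r k j t"
proof -
  obtain q where q: "r = Suc q" using r by (cases r) auto
  have I: "{1..r} = insert r {1..q}" using q by auto
  have rq: "r \<notin> {1..q}" using q by auto
  have eq: "multi_idx r k j = multi_idx q k j"
  proof (intro set_eqI iffI)
    fix \<alpha> assume a: "\<alpha> \<in> multi_idx r k j"
    then have s: "(\<Sum>l\<in>{1..r}. l * \<alpha> l) = j" by (simp add: multi_idx_def)
    have "(\<Sum>l\<in>{1..r}. l * \<alpha> l) = r * \<alpha> r + (\<Sum>l\<in>{1..q}. l * \<alpha> l)"
      unfolding I by (rule sum.insert[OF finite_atLeastAtMost rq])
    with s have "r * \<alpha> r + (\<Sum>l=1..q. l * \<alpha> l) = j" by simp
    then have "r * \<alpha> r < r" using j by linarith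
    then have ar: "\<alpha> r = 0" by simp
    then show "\<alpha> \<in> multi_idx q k j" using a by (auto simp: multi_idx_def I rq q le_Suc_eq)
  next
    fix \<alpha> assume a: "\<alpha> \<in> multi_idx q k j"
    then have ar: "\<alpha> r = 0" by (auto simp: multi_idx_def q)
    have s1: "(\<Sum>l\<in>{1..r}. \<alpha> l) = \<alpha> r + (\<Sum>l\<in>{1..q}. \<alpha> l)"
      unfolding I by (rule sum.insert[OF finite_atLeastAtMost rq])
    have s2: "(\<Sum>l\<in>{1..r}. l * \<alpha> l) = r * \<alpha> r + (\<Sum>l\<in>{1..q}. l * \<alpha> l)"
      unfolding I by (rule sum.insert[OF finite_atLeastAtMost rq])
    have s3: "\<forall>l. l \<notin> {1..r} \<longrightarrow> \<alpha> l = 0" using a unfolding multi_idx_def I by auto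
    show "\<alpha> \<in> multi_idx r k j" using a s1 s2 s3 ar unfolding multi_idx_def by simp
  qed
  have rq1: "r - 1 = q" using q by simp
  show ?thesis unfolding Mpoly_def eq rq1
  proof (rule sum.cong[OF refl])
    fix \<alpha> assume "\<alpha> \<in> multi_idx q k j"
    then have ar: "\<alpha> r = 0" by (auto simp: multi_idx_def q)
    have p1: "(\<Prod>l\<in>{1..r}. fact (\<alpha> l)) = fact (\<alpha> r) * (\<Prod>l\<in>{1..q}. fact (\<alpha> l) :: nat)"
      unfolding I by (rule prod.insert[OF finite_atLeastAtMost rq])
    have p2: "(\<Prod>l\<in>{1..r}. t l ^ \<alpha> l) = t r ^ \<alpha> r * (\<Prod>l\<in>{1..q}. t l ^ \<alpha> l)"
      unfolding I by (rule prod.insert[OF finite_atLeastAtMost rq])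
    show "of_nat (fact k) / of_nat (\<Prod>l = 1..q. fact (\<alpha> l)) * (\<Prod>l = 1..q. t l ^ \<alpha> l) =
          of_nat (fact k) / of_nat (\<Prod>l = 1..r. fact (\<alpha> l)) * (\<Prod>l = 1..r. t l ^ \<alpha> l)"
      unfolding p1 p2 ar by simp
  qed
qed

lemma csc_nth [simp]: "csc c A $ i $ j = c * A $ i $ j"
  by (simp add: csc_def)

lemma mat_eqI: "(\<And>i j. A $ i $ j = B $ i $ j) \<Longrightarrow> A = (B :: ('m::finite) cmat)"
  by (simp add: vec_eq_iff)

lemma tendsto_csc:
  fixes D :: "'a \<Rightarrow> ('m::finite) cmat"
  assumes "(c \<longlongrightarrow> c0) F" "(D \<longlongrightarrow> D0) F"
  shows "((\<lambda>x. csc (c x) (D x)) \<longlongrightarrow> csc c0 D0) F"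
proof (rule vec_tendstoI)
  fix i
  show "((\<lambda>x. csc (c x) (D x) $ i) \<longlongrightarrow> csc c0 D0 $ i) F"
  proof (rule vec_tendstoI)
    fix j
    show "((\<lambda>x. csc (c x) (D x) $ i $ j) \<longlongrightarrow> csc c0 D0 $ i $ j) F"
      unfolding csc_nth by (intro tendsto_mult tendsto_vec_nth assms)
  qed
qed

lemma asymp_rem:
  fixes f :: "complex \<Rightarrow> ('m::finite) cmat"
  assumes "has_asymp_exp f lo c" "lo \<le> 0"
  shows "((\<lambda>\<epsilon>. f \<epsilon> - (\<Sum>j\<in>{lo..0}. csc (\<epsilon> powi j) (c j))) \<longlongrightarrow> 0) (at 0)"
proof -
  obtain K where K: "\<forall>\<^sub>F \<epsilon> in at 0. norm (f \<epsilon> - (\<Sum>j\<in>{lo..0}. csc (\<epsilon> powi j) (c j))) \<le> K * cmod \<epsilon> powr of_int (0 + 1)"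
    using assms unfolding has_asymp_exp_def by blast
  have eq: "\<And>\<epsilon>::complex. K * cmod \<epsilon> powr of_int (0 + 1) = K * cmod \<epsilon>" by simp
  have "((\<lambda>\<epsilon>::complex. K * cmod \<epsilon>) \<longlongrightarrow> K * 0) (at 0)"
    by (intro tendsto_intros tendsto_norm_zero tendsto_ident_at)
  then have "((\<lambda>\<epsilon>::complex. K * cmod \<epsilon> powr of_int (0 + 1)) \<longlongrightarrow> 0) (at 0)" unfolding eq by simp
  then show ?thesis by (rule Lim_null_comparison[OF K])
qed

lemma reindex_neg: "(\<Sum>i\<in>{- int m..0}. f i) = (\<Sum>s=0..m. f (- int s))"
  by (rule sum.reindex_bij_witness[of _ "\<lambda>s. - int s" "\<lambda>i. nat (- i)"]) auto

lemma reindex_shift: "j \<le> r \<Longrightarrow> (\<Sum>i\<in>{- int (r - j)..0}. f i) = (\<Sum>s=j..r. f (int j - int s))"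
  by (rule sum.reindex_bij_witness[of _ "\<lambda>s. int j - int s" "\<lambda>i. nat (int j - i)"]) auto

lemma coef_id:
  fixes e d :: complex and P :: "nat \<Rightarrow> complex"
  assumes e: "e \<noteq> 0" and sD: "s \<le> D" and dexp: "d ^ n = (\<Sum>j=0..D. P j * e ^ j)"
  shows "d ^ n / e ^ s - (\<Sum>j<s. P j * (e ^ j / e ^ s)) - P s = (\<Sum>j=s+1..D. P j * e ^ (j - s))"
proof -
  have "d ^ n / e ^ s = (\<Sum>j=0..D. P j * (e ^ j / e ^ s))" by (simp add: dexp sum_divide_distrib)
  also have "{0..D} = {..<s} \<union> {s..D}" using sD by auto
  also have "(\<Sum>j\<in>{..<s} \<union> {s..D}. P j * (e ^ j / e ^ s)) = (\<Sum>j<s. P j * (e ^ j / e ^ s)) + (\<Sum>j=s..D. P j * (e ^ j / e ^ s))"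
    by (rule sum.union_disjoint) auto
  also have "(\<Sum>j=s..D. P j * (e ^ j / e ^ s)) = P s + (\<Sum>j=Suc s..D. P j * (e ^ j / e ^ s))"
    using sD e by (subst sum.atLeast_Suc_atMost) auto
  also have "(\<Sum>j=Suc s..D. P j * (e ^ j / e ^ s)) = (\<Sum>j=s+1..D. P j * e ^ (j - s))"
    using e by (intro sum.cong) (auto simp: power_diff)
  finally show ?thesis by simp
qed

lemma main_scalar:
  fixes e d :: complex and w :: "int \<Rightarrow> complex" and ak :: "nat \<Rightarrow> nat \<Rightarrow> complex" and P P' :: "nat \<Rightarrow> complex"
  assumes e: "e \<noteq> 0" and nr: "n \<le> r" and r: "r \<ge> 1" and P': "\<And>j. j < r \<Longrightarrow> P' j = P j"
    and Pz: "\<And>j. j < n \<Longrightarrow> P j = 0"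
    and dexp: "d ^ n = (\<Sum>j=0..D. P j * e ^ j)" and D: "r \<le> D"
  shows "d ^ n * (\<Sum>i\<in>{- int r..0}. e powi i * w i)
   + (\<Sum>j=n..r-1. P' j * (\<Sum>i\<in>{- int (r - j)..0}. e powi i * (if i < 0 then - w (i - int j) else ak j (nat i))))
   - (\<Sum>k=n..r. P k * (if k < r then w (- int k) + ak k 0 else w (- int r)))
   = (\<Sum>s=0..r. (\<Sum>j=s+1..D. P j * e ^ (j - s)) * w (- int s))"
proof -
  define X where "X = (\<lambda>j s. if j < s then e ^ j / e ^ s * w (- int s) else 0)"
  have A: "(\<Sum>i\<in>{- int r..0}. e powi i * w i) = (\<Sum>s=0..r. w (- int s) / e ^ s)"
    unfolding reindex_neg by (intro sum.cong) (auto simp: power_int_minus field_simps)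
  have B: "(\<Sum>i\<in>{- int (r - j)..0}. e powi i * (if i < 0 then - w (i - int j) else ak j (nat i)))
      = ak j 0 - (\<Sum>s=0..r. X j s)" if jr: "j \<le> r" for j
  proof -
    have "(\<Sum>i\<in>{- int (r - j)..0}. e powi i * (if i < 0 then - w (i - int j) else ak j (nat i)))
       = (\<Sum>s=j..r. e powi (int j - int s) * (if int j - int s < 0 then - w (int j - int s - int j) else ak j (nat (int j - int s))))"
      by (rule reindex_shift[OF jr])
    also have "\<dots> = ak j 0 + (\<Sum>s=Suc j..r. e powi (int j - int s) * (if int j - int s < 0 then - w (int j - int s - int j) else ak j (nat (int j - int s))))"
      using jr by (subst sum.atLeast_Suc_atMost) auto
    also have "(\<Sum>s=Suc j..r. e powi (int j - int s) * (if int j - int s < 0 then - w (int j - int s - int j) else ak j (nat (int j - int s))))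
       = (\<Sum>s=Suc j..r. - (e ^ j / e ^ s * w (- int s)))"
      using e by (intro sum.cong) (auto simp: power_int_diff)
    also have "\<dots> = - (\<Sum>s\<in>{s\<in>{0..r}. j < s}. e ^ j / e ^ s * w (- int s))"
    proof -
      have "{s\<in>{0..r}. j < s} = {Suc j..r}" by auto
      then show ?thesis by (simp add: sum_negf)
    qed
    also have "(\<Sum>s\<in>{s\<in>{0..r}. j < s}. e ^ j / e ^ s * w (- int s)) = (\<Sum>s=0..r. X j s)"
      unfolding X_def by (rule sum.inter_filter) simp
    finally show ?thesis by simp
  qed
  have T: "(\<Sum>k=n..r. P k * (if k < r then w (- int k) + ak k 0 else w (- int r)))
     = (\<Sum>k=n..r. P k * w (- int k)) + (\<Sum>k=n..r-1. P k * ak k 0)"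
  proof -
    have "(\<Sum>k=n..r. P k * (if k < r then w (- int k) + ak k 0 else w (- int r)))
       = (\<Sum>k=n..r. P k * w (- int k) + (if k < r then P k * ak k 0 else 0))"
      by (intro sum.cong) (auto simp: algebra_simps)
    also have "\<dots> = (\<Sum>k=n..r. P k * w (- int k)) + (\<Sum>k\<in>{k\<in>{n..r}. k < r}. P k * ak k 0)"
      by (simp only: sum.distrib sum.inter_filter[OF finite_atLeastAtMost])
    also have "{k\<in>{n..r}. k < r} = {n..r-1}" using r by auto
    finally show ?thesis .
  qed
  have Ak: "(\<Sum>j=n..r-1. P' j * (ak j 0 - (\<Sum>s=0..r. X j s)))
      = (\<Sum>j=n..r-1. P j * ak j 0) - (\<Sum>j=0..r-1. P j * (\<Sum>s=0..r. X j s))"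
  proof -
    have "(\<Sum>j=n..r-1. P' j * (ak j 0 - (\<Sum>s=0..r. X j s)))
        = (\<Sum>j=n..r-1. P j * ak j 0 - P j * (\<Sum>s=0..r. X j s))"
      using r by (intro sum.cong) (auto simp: P' algebra_simps)
    also have "\<dots> = (\<Sum>j=n..r-1. P j * ak j 0) - (\<Sum>j=n..r-1. P j * (\<Sum>s=0..r. X j s))"
      by (simp add: sum_subtractf)
    also have "(\<Sum>j=n..r-1. P j * (\<Sum>s=0..r. X j s)) = (\<Sum>j=0..r-1. P j * (\<Sum>s=0..r. X j s))"
      by (rule sum.mono_neutral_left) (auto simp: Pz)
    finally show ?thesis .
  qed
  have W1: "(\<Sum>k=n..r. P k * w (- int k)) = (\<Sum>s=0..r. P s * w (- int s))"
    by (rule sum.mono_neutral_left) (auto simp: Pz)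
  have SW: "(\<Sum>j=0..r-1. P j * (\<Sum>s=0..r. X j s)) = (\<Sum>s=0..r. (\<Sum>j<s. P j * (e ^ j / e ^ s)) * w (- int s))"
  proof -
    have "(\<Sum>j=0..r-1. P j * (\<Sum>s=0..r. X j s)) = (\<Sum>s=0..r. \<Sum>j=0..r-1. P j * X j s)"
      unfolding sum_distrib_left by (rule sum.swap)
    also have "\<dots> = (\<Sum>s=0..r. (\<Sum>j<s. P j * (e ^ j / e ^ s)) * w (- int s))"
    proof (rule sum.cong[OF refl])
      fix s assume s: "s \<in> {0..r}"
      have "(\<Sum>j=0..r-1. P j * X j s) = (\<Sum>j=0..r-1. if j < s then P j * (e ^ j / e ^ s) * w (- int s) else 0)"
        unfolding X_def by (intro sum.cong) auto
      also have "\<dots> = (\<Sum>j\<in>{j\<in>{0..r-1}. j < s}. P j * (e ^ j / e ^ s) * w (- int s))"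
        by (rule sum.inter_filter[symmetric]) simp
      also have "{j\<in>{0..r-1}. j < s} = {..<s}" using s r by auto
      finally show "(\<Sum>j=0..r-1. P j * X j s) = (\<Sum>j<s. P j * (e ^ j / e ^ s)) * w (- int s)"
        by (simp add: sum_distrib_right)
    qed
    finally show ?thesis .
  qed
  have C: "d ^ n / e ^ s - (\<Sum>j<s. P j * (e ^ j / e ^ s)) - P s = (\<Sum>j=s+1..D. P j * e ^ (j - s))"
    if "s \<in> {0..r}" for s
    using that D by (intro coef_id[OF e _ dexp]) auto
  have Bs: "(\<Sum>j=n..r-1. P' j * (\<Sum>i\<in>{- int (r - j)..0}. e powi i * (if i < 0 then - w (i - int j) else ak j (nat i))))
     = (\<Sum>j=n..r-1. P' j * (ak j 0 - (\<Sum>s=0..r. X j s)))"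
  proof (rule sum.cong[OF refl])
    fix j assume "j \<in> {n..r-1}"
    then have "j \<le> r" by auto
    then show "P' j * (\<Sum>i\<in>{- int (r - j)..0}. e powi i * (if i < 0 then - w (i - int j) else ak j (nat i)))
      = P' j * (ak j 0 - (\<Sum>s=0..r. X j s))" by (simp only: B)
  qed
  have "d ^ n * (\<Sum>i\<in>{- int r..0}. e powi i * w i)
   + (\<Sum>j=n..r-1. P' j * (\<Sum>i\<in>{- int (r - j)..0}. e powi i * (if i < 0 then - w (i - int j) else ak j (nat i))))
   - (\<Sum>k=n..r. P k * (if k < r then w (- int k) + ak k 0 else w (- int r)))
   = d ^ n * (\<Sum>s=0..r. w (- int s) / e ^ s) + (\<Sum>j=n..r-1. P' j * (ak j 0 - (\<Sum>s=0..r. X j s)))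
     - ((\<Sum>k=n..r. P k * w (- int k)) + (\<Sum>k=n..r-1. P k * ak k 0))"
    using nr r Bs by (simp only: A T)
  also have "\<dots> = (\<Sum>s=0..r. (d ^ n / e ^ s - (\<Sum>j<s. P j * (e ^ j / e ^ s)) - P s) * w (- int s))"
    unfolding Ak W1 SW by (simp add: sum_distrib_left algebra_simps sum_subtractf sum.distrib)
  also have "\<dots> = (\<Sum>s=0..r. (\<Sum>j=s+1..D. P j * e ^ (j - s)) * w (- int s))"
    using C by (intro sum.cong) auto
  finally show ?thesis .
qed

lemma vec_nth_if [simp]: "(if P then X else Y) $ i = (if P then X $ i else Y $ i)"
  by simp

lemma csc_0_right [simp]: "csc c 0 = (0 :: ('m::finite) cmat)"
  by (rule mat_eqI) simp

lemma csc_0_left [simp]: "csc 0 A = (0 :: ('m::finite) cmat)"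
  by (rule mat_eqI) simp

lemma null_sum:
  fixes g :: "'i \<Rightarrow> 'a \<Rightarrow> 'b::topological_comm_monoid_add"
  assumes "\<And>i. i \<in> I \<Longrightarrow> ((\<lambda>x. g i x) \<longlongrightarrow> 0) F"
  shows "((\<lambda>x. \<Sum>i\<in>I. g i x) \<longlongrightarrow> 0) F"
  using tendsto_sum[of I "\<lambda>i x. g i x" "\<lambda>i. 0" F] assms by simp

lemma pow_tendsto0: "0 < k \<Longrightarrow> ((\<lambda>\<epsilon>::complex. c * \<epsilon> ^ k) \<longlongrightarrow> 0) (at 0)"
proof -
  assume k: "0 < k"
  have "((\<lambda>\<epsilon>::complex. c * \<epsilon> ^ k) \<longlongrightarrow> c * 0 ^ k) (at 0)"
    by (intro tendsto_intros tendsto_ident_at)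
  moreover have "c * (0::complex) ^ k = 0" using k by (simp add: zero_power)
  ultimately show ?thesis by metis
qed

lemma geom:
  fixes a d :: complex
  assumes "a \<noteq> 0" "a \<noteq> d"
  shows "1 / (a - d) = (\<Sum>n=0..N. d ^ n / a ^ (n + 1)) + d ^ (N + 1) / (a ^ (N + 1) * (a - d))"
proof (induction N)
  case 0 then show ?case using assms by (simp add: field_simps)
next
  case (Suc N)
  have "d ^ (N + 1) / (a ^ (N + 1) * (a - d)) = d ^ (N + 1) / a ^ (N + 2) + d ^ (N + 2) / (a ^ (N + 2) * (a - d))"
    using assms by (simp add: field_simps)
  then show ?case using Suc by simp
qed

lemma repr_scalar:
  fixes a d c :: complex and B :: "nat \<Rightarrow> complex"
  assumes a: "a \<noteq> 0" "a \<noteq> d" and Br: "B r = 0"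
  shows "(\<Sum>n=0..r. 1 / a ^ (n + 1) * (d ^ n * c + B n)) + 1 / (a ^ (r + 1) * (a - d)) * (d ^ (r + 1) * c)
       = (\<Sum>k<r. 1 / a ^ (k + 1) * B k) + 1 / (a - d) * c"
proof -
  have g: "1 / (a - d) = (\<Sum>n=0..r. d ^ n / a ^ (n + 1)) + d ^ (r + 1) / (a ^ (r + 1) * (a - d))"
    by (rule geom[OF a])
  have e1a: "(\<Sum>n=0..r. 1 / a ^ (n + 1) * (d ^ n * c + B n)) = (\<Sum>n=0..r. d ^ n / a ^ (n + 1) * c + 1 / a ^ (n + 1) * B n)"
    by (rule sum.cong) (simp_all add: a field_simps)
  have e1b: "(\<Sum>n=0..r. d ^ n / a ^ (n + 1) * c + 1 / a ^ (n + 1) * B n) = (\<Sum>n=0..r. d ^ n / a ^ (n + 1)) * c + (\<Sum>n=0..r. 1 / a ^ (n + 1) * B n)"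
    by (simp add: sum.distrib sum_distrib_right)
  have I: "{0..r} = insert r {..<r}" by auto
  have e2: "(\<Sum>n=0..r. 1 / a ^ (n + 1) * B n) = (\<Sum>n<r. 1 / a ^ (n + 1) * B n)"
    unfolding I using Br by simp
  show ?thesis unfolding e1a e1b e2 g by (simp add: algebra_simps)
qed

theorem theorem0p6:
  fixes r :: nat and u :: complex and t :: "nat \<Rightarrow> complex"
    and A :: "nat \<Rightarrow> complex \<Rightarrow> ('m::finite) cmat"
    and C :: "complex \<Rightarrow> 'm cmat"
    and H :: "complex \<Rightarrow> complex \<Rightarrow> 'm cmat"
    and H0 :: "complex \<Rightarrow> 'm cmat"
    and W :: "int \<Rightarrow> 'm cmat" and Akl :: "nat \<Rightarrow> nat \<Rightarrow> 'm cmat"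
    and Acon :: "complex \<Rightarrow> complex \<Rightarrow> 'm cmat"
    and U :: "complex set"
  assumes r: "r \<ge> 1"
    and U: "open U" "u \<in> U"
    and conn: "\<And>\<epsilon> z. Acon \<epsilon> z =
        (\<Sum>k<r. csc (1 / (z - u) ^ (k + 1))
                     (\<Sum>j=k..r-1. csc (Mpoly (r - 1) k j t) (A j \<epsilon>)))
        + csc (1 / (z - (u + (\<Sum>i=1..r. t i * \<epsilon> ^ i)))) (C \<epsilon>)
        + H \<epsilon> z"
    and C_exp: "has_asymp_exp C (- int r) W"
    and A_exp: "\<And>k. k < r \<Longrightarrow> has_asymp_exp (A k) (- int (r - k))
                   (\<lambda>j. if j < 0 then - W (j - int k) else Akl k (nat j))"
    and H_holo: "\<forall>\<^sub>F \<epsilon> in at 0. mat_holo_on (H \<epsilon>) U"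
    and H_lim: "\<And>z. z \<in> U \<Longrightarrow> ((\<lambda>\<epsilon>. H \<epsilon> z) \<longlongrightarrow> H0 z) (at 0)"
    and H0_holo: "mat_holo_on H0 U"
  shows "\<forall>z\<in>U - {u}. ((\<lambda>\<epsilon>. Acon \<epsilon> z) \<longlongrightarrow>
           (\<Sum>i=0..r. csc (1 / (z - u) ^ (i + 1))
               (\<Sum>k=i..r. csc (Mpoly r i k t)
                  (if k < r then W (- int k) + Akl k 0 else W (- int r))))
           + H0 z) (at 0)"
proof (intro ballI)
  fix z assume zU: "z \<in> U - {u}"
  define a where "a = z - u"
  have a0: "a \<noteq> 0" using zU by (auto simp: a_def)
  define \<delta> where "\<delta> = (\<lambda>\<epsilon>::complex. \<Sum>i=1..r. t i * \<epsilon> ^ i)"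
  define Atil where "Atil = (\<lambda>k. if k < r then W (- int k) + Akl k 0 else W (- int r))"
  define Tn where "Tn = (\<lambda>n. \<Sum>k=n..r. csc (Mpoly r n k t) (Atil k))"
  define E where "E = (\<lambda>n \<epsilon>. csc (\<delta> \<epsilon> ^ n) (C \<epsilon>) + (\<Sum>j=n..r-1. csc (Mpoly (r-1) n j t) (A j \<epsilon>)))"
  define cA where "cA = (\<lambda>j (i::int). if i < 0 then - W (i - int j) else Akl j (nat i))"
  define RC where "RC = (\<lambda>\<epsilon>. C \<epsilon> - (\<Sum>i\<in>{- int r..0}. csc (\<epsilon> powi i) (W i)))"
  define RA where "RA = (\<lambda>j \<epsilon>. A j \<epsilon> - (\<Sum>i\<in>{- int (r-j)..0}. csc (\<epsilon> powi i) (cA j i)))"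
  have RC0: "(RC \<longlongrightarrow> 0) (at 0)" unfolding RC_def by (rule asymp_rem[OF C_exp]) simp
  have RA0: "(RA j \<longlongrightarrow> 0) (at 0)" if "j < r" for j
    unfolding RA_def cA_def by (rule asymp_rem[OF A_exp[OF that]]) simp
  have \<delta>0: "(\<delta> \<longlongrightarrow> 0) (at 0)"
    unfolding \<delta>_def by (rule null_sum) (intro pow_tendsto0, auto)
  have ev0: "\<forall>\<^sub>F \<epsilon> in at (0::complex). \<epsilon> \<noteq> 0" by (simp add: eventually_at_filter)
  have E_lim: "(E n \<longlongrightarrow> Tn n) (at 0)" if nr: "n \<le> r" for n
  proof -
    define D where "D = r * n + r"
    define \<phi> where "\<phi> = (\<lambda>s (\<epsilon>::complex). \<Sum>j=s+1..D. Mpoly r n j t * \<epsilon> ^ (j - s))"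
    have idt: "E n \<epsilon> - Tn n = csc (\<delta> \<epsilon> ^ n) (RC \<epsilon>) + (\<Sum>j=n..r-1. csc (Mpoly (r-1) n j t) (RA j \<epsilon>))
        + (\<Sum>s=0..r. csc (\<phi> s \<epsilon>) (W (- int s)))" if e: "\<epsilon> \<noteq> 0" for \<epsilon>
    proof (rule mat_eqI)
      fix p q
      have dexp: "\<delta> \<epsilon> ^ n = (\<Sum>j=0..D. Mpoly r n j t * \<epsilon> ^ j)" unfolding \<delta>_def D_def by (rule Mpoly_expand) simp
      have ms: "\<delta> \<epsilon> ^ n * (\<Sum>i\<in>{- int r..0}. \<epsilon> powi i * W i $ p $ q)
        + (\<Sum>j=n..r-1. Mpoly (r-1) n j t * (\<Sum>i\<in>{- int (r - j)..0}. \<epsilon> powi i * (if i < 0 then - W (i - int j) $ p $ q else Akl j (nat i) $ p $ q)))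
        - (\<Sum>k=n..r. Mpoly r n k t * (if k < r then W (- int k) $ p $ q + Akl k 0 $ p $ q else W (- int r) $ p $ q))
        = (\<Sum>s=0..r. (\<Sum>j=s+1..D. Mpoly r n j t * \<epsilon> ^ (j - s)) * W (- int s) $ p $ q)"
        by (rule main_scalar[where w = "\<lambda>i. W i $ p $ q" and ak = "\<lambda>j l. Akl j l $ p $ q"
             and P = "\<lambda>j. Mpoly r n j t" and P' = "\<lambda>j. Mpoly (r-1) n j t", OF e nr r Mpoly_pred[OF r] Mpoly_below dexp])
           (auto simp: D_def)
      show "(E n \<epsilon> - Tn n) $ p $ q = (csc (\<delta> \<epsilon> ^ n) (RC \<epsilon>) + (\<Sum>j=n..r-1. csc (Mpoly (r-1) n j t) (RA j \<epsilon>))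
        + (\<Sum>s=0..r. csc (\<phi> s \<epsilon>) (W (- int s)))) $ p $ q"
        using ms unfolding E_def Tn_def RC_def RA_def \<phi>_def cA_def Atil_def
        by (simp add: right_diff_distrib sum_subtractf sum_distrib_left algebra_simps vector_uminus_component vector_add_component cong: if_cong)
    qed
    have "((\<lambda>\<epsilon>. csc (\<delta> \<epsilon> ^ n) (RC \<epsilon>) + (\<Sum>j=n..r-1. csc (Mpoly (r-1) n j t) (RA j \<epsilon>))
        + (\<Sum>s=0..r. csc (\<phi> s \<epsilon>) (W (- int s)))) \<longlongrightarrow> csc (0 ^ n) 0 + (\<Sum>j=n..r-1. csc (Mpoly (r-1) n j t) 0)
        + (\<Sum>s=0..r. csc 0 (W (- int s)))) (at 0)"
    proof (intro tendsto_add tendsto_sum tendsto_csc tendsto_const tendsto_power \<delta>0 RC0 RA0)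
      show "j \<in> {n..r-1} \<Longrightarrow> j < r" for j using r by auto
      show "((\<phi> s) \<longlongrightarrow> 0) (at 0)" for s
        unfolding \<phi>_def by (rule null_sum) (intro pow_tendsto0, auto)
    qed
    then have G0: "((\<lambda>\<epsilon>. csc (\<delta> \<epsilon> ^ n) (RC \<epsilon>) + (\<Sum>j=n..r-1. csc (Mpoly (r-1) n j t) (RA j \<epsilon>))
        + (\<Sum>s=0..r. csc (\<phi> s \<epsilon>) (W (- int s)))) \<longlongrightarrow> 0) (at 0)" by simp
    have "((\<lambda>\<epsilon>. E n \<epsilon> - Tn n) \<longlongrightarrow> 0) (at 0)"
      using G0 by (rule Lim_transform_eventually) (use ev0 in \<open>eventually_elim, simp add: idt\<close>)
    then show ?thesis by (simp add: Lim_null[symmetric])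
  qed

  have C_lim: "((\<lambda>\<epsilon>. csc (\<delta> \<epsilon> ^ (r + 1)) (C \<epsilon>)) \<longlongrightarrow> 0) (at 0)"
  proof -
    define Q where "Q = (\<lambda>\<epsilon>::complex. \<Sum>i=1..r. t i * \<epsilon> ^ (i - 1))"
    have dQ: "\<delta> \<epsilon> = \<epsilon> * Q \<epsilon>" for \<epsilon>
      unfolding \<delta>_def Q_def sum_distrib_left
    proof (rule sum.cong[OF refl])
      fix i assume "i \<in> {1..r}"
      then obtain i' where "i = Suc i'" by (cases i) auto
      then show "t i * \<epsilon> ^ i = \<epsilon> * (t i * \<epsilon> ^ (i - 1))" by simp
    qed
    have idC: "csc (\<delta> \<epsilon> ^ (r + 1)) (C \<epsilon>) = csc (\<delta> \<epsilon> ^ (r + 1)) (RC \<epsilon>)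
        + (\<Sum>s=0..r. csc (\<epsilon> ^ (r + 1 - s) * Q \<epsilon> ^ (r + 1)) (W (- int s)))" if e: "\<epsilon> \<noteq> 0" for \<epsilon>
    proof (rule mat_eqI)
      fix p q
      have "\<delta> \<epsilon> ^ (r + 1) * (\<Sum>i\<in>{- int r..0}. \<epsilon> powi i * W i $ p $ q)
          = (\<Sum>s=0..r. \<delta> \<epsilon> ^ (r + 1) * (\<epsilon> powi (- int s) * W (- int s) $ p $ q))"
        unfolding reindex_neg sum_distrib_left ..
      also have "\<dots> = (\<Sum>s=0..r. \<epsilon> ^ (r + 1 - s) * Q \<epsilon> ^ (r + 1) * W (- int s) $ p $ q)"
      proof (rule sum.cong[OF refl])
        fix s assume "s \<in> {0..r}"
        then have sr: "s \<le> r + 1" by auto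
        have "\<epsilon> ^ (r + 1 - s) = \<epsilon> ^ (r + 1) / \<epsilon> ^ s" using e sr by (rule power_diff)
        then show "\<delta> \<epsilon> ^ (r + 1) * (\<epsilon> powi (- int s) * W (- int s) $ p $ q) = \<epsilon> ^ (r + 1 - s) * Q \<epsilon> ^ (r + 1) * W (- int s) $ p $ q"
          unfolding dQ using e by (simp add: power_int_minus power_mult_distrib field_simps)
      qed
      finally have X: "\<delta> \<epsilon> ^ (r + 1) * (\<Sum>i\<in>{- int r..0}. \<epsilon> powi i * W i $ p $ q)
          = (\<Sum>s=0..r. \<epsilon> ^ (r + 1 - s) * Q \<epsilon> ^ (r + 1) * W (- int s) $ p $ q)" .
      show "csc (\<delta> \<epsilon> ^ (r + 1)) (C \<epsilon>) $ p $ q = (csc (\<delta> \<epsilon> ^ (r + 1)) (RC \<epsilon>)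
        + (\<Sum>s=0..r. csc (\<epsilon> ^ (r + 1 - s) * Q \<epsilon> ^ (r + 1)) (W (- int s)))) $ p $ q"
        using X unfolding RC_def by (simp add: right_diff_distrib)
    qed
    have "((\<lambda>\<epsilon>. csc (\<delta> \<epsilon> ^ (r + 1)) (RC \<epsilon>)
        + (\<Sum>s=0..r. csc (\<epsilon> ^ (r + 1 - s) * Q \<epsilon> ^ (r + 1)) (W (- int s))))
        \<longlongrightarrow> csc (0 ^ (r + 1)) 0 + (\<Sum>s=0..r. csc 0 (W (- int s)))) (at 0)"
    proof (intro tendsto_add tendsto_sum tendsto_csc tendsto_const tendsto_power \<delta>0 RC0)
      fix s assume "s \<in> {0..r}"
      then have "0 < r + 1 - s" by auto
      then have "((\<lambda>\<epsilon>::complex. 1 * \<epsilon> ^ (r + 1 - s)) \<longlongrightarrow> 0) (at 0)" by (rule pow_tendsto0)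
      then have "((\<lambda>\<epsilon>::complex. (1 * \<epsilon> ^ (r + 1 - s)) * Q \<epsilon> ^ (r + 1)) \<longlongrightarrow> 0 * Q 0 ^ (r + 1)) (at 0)"
        unfolding Q_def by (intro tendsto_intros) auto
      then show "((\<lambda>\<epsilon>. \<epsilon> ^ (r + 1 - s) * Q \<epsilon> ^ (r + 1)) \<longlongrightarrow> 0) (at 0)" by simp
    qed
    then have G0: "((\<lambda>\<epsilon>. csc (\<delta> \<epsilon> ^ (r + 1)) (RC \<epsilon>)
        + (\<Sum>s=0..r. csc (\<epsilon> ^ (r + 1 - s) * Q \<epsilon> ^ (r + 1)) (W (- int s)))) \<longlongrightarrow> 0) (at 0)" by simp
    show ?thesis
      using G0 by (rule Lim_transform_eventually) (rule eventually_mono[OF ev0], rule idC[symmetric], assumption)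
  qed

  have evd: "\<forall>\<^sub>F \<epsilon> in at 0. \<delta> \<epsilon> \<noteq> a"
  proof -
    have "\<forall>\<^sub>F \<epsilon> in at 0. dist (\<delta> \<epsilon>) 0 < cmod a" using \<delta>0 a0 by (intro tendstoD) auto
    then show ?thesis by eventually_elim auto
  qed
  have repr: "\<forall>\<^sub>F \<epsilon> in at 0. (\<Sum>n=0..r. csc (1 / a ^ (n + 1)) (E n \<epsilon>))
      + csc (1 / (a ^ (r + 1) * (a - \<delta> \<epsilon>))) (csc (\<delta> \<epsilon> ^ (r + 1)) (C \<epsilon>)) + H \<epsilon> z = Acon \<epsilon> z"
  proof -
    have "\<forall>\<^sub>F \<epsilon> in at 0. \<delta> \<epsilon> \<noteq> a" by (rule evd)
    then show ?thesis
    proof (rule eventually_mono)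
      fix \<epsilon> assume da: "\<delta> \<epsilon> \<noteq> a"
      show "(\<Sum>n=0..r. csc (1 / a ^ (n + 1)) (E n \<epsilon>))
        + csc (1 / (a ^ (r + 1) * (a - \<delta> \<epsilon>))) (csc (\<delta> \<epsilon> ^ (r + 1)) (C \<epsilon>)) + H \<epsilon> z = Acon \<epsilon> z"
      proof (rule mat_eqI)
        fix p q
        define B where "B = (\<lambda>n. \<Sum>j=n..r-1. Mpoly (r-1) n j t * A j \<epsilon> $ p $ q)"
        have Br: "B r = 0" unfolding B_def using r by simp
        have zv: "z - (u + (\<Sum>i=1..r. t i * \<epsilon> ^ i)) = a - \<delta> \<epsilon>" by (simp add: a_def \<delta>_def)
        have zu: "z - u = a" by (simp add: a_def)
        have rs: "(\<Sum>n=0..r. 1 / a ^ (n + 1) * (\<delta> \<epsilon> ^ n * C \<epsilon> $ p $ q + B n))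
           + 1 / (a ^ (r + 1) * (a - \<delta> \<epsilon>)) * (\<delta> \<epsilon> ^ (r + 1) * C \<epsilon> $ p $ q)
           = (\<Sum>k<r. 1 / a ^ (k + 1) * B k) + 1 / (a - \<delta> \<epsilon>) * C \<epsilon> $ p $ q"
          by (rule repr_scalar[where B = B and r = r, OF a0 da[symmetric] Br])
        show "((\<Sum>n=0..r. csc (1 / a ^ (n + 1)) (E n \<epsilon>))
          + csc (1 / (a ^ (r + 1) * (a - \<delta> \<epsilon>))) (csc (\<delta> \<epsilon> ^ (r + 1)) (C \<epsilon>)) + H \<epsilon> z) $ p $ q = Acon \<epsilon> z $ p $ q"
          unfolding conn zv zu using rs by (simp add: E_def B_def sum_distrib_left)
      qed
    qed
  qed

  have lim: "((\<lambda>\<epsilon>. (\<Sum>n=0..r. csc (1 / a ^ (n + 1)) (E n \<epsilon>))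
      + csc (1 / (a ^ (r + 1) * (a - \<delta> \<epsilon>))) (csc (\<delta> \<epsilon> ^ (r + 1)) (C \<epsilon>)) + H \<epsilon> z)
      \<longlongrightarrow> (\<Sum>n=0..r. csc (1 / a ^ (n + 1)) (Tn n)) + csc (1 / (a ^ (r + 1) * (a - 0))) 0 + H0 z) (at 0)"
    using zU by (intro tendsto_add tendsto_sum tendsto_csc tendsto_const E_lim C_lim H_lim tendsto_divide
       tendsto_mult tendsto_diff \<delta>0) (auto simp: a0)
  have "((\<lambda>\<epsilon>. Acon \<epsilon> z) \<longlongrightarrow> (\<Sum>n=0..r. csc (1 / a ^ (n + 1)) (Tn n)) + H0 z) (at 0)"
    using Lim_transform_eventually[OF lim repr] by simp
  then show "((\<lambda>\<epsilon>. Acon \<epsilon> z) \<longlongrightarrow>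
           (\<Sum>i=0..r. csc (1 / (z - u) ^ (i + 1))
               (\<Sum>k=i..r. csc (Mpoly r i k t)
                  (if k < r then W (- int k) + Akl k 0 else W (- int r))))
           + H0 z) (at 0)"
    by (simp add: a_def Tn_def Atil_def)
qed

end
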